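(* Let $G_0$ be a connected graph containing vertices $u_1,u_2,u_3,u_4$ with $d_{G_0}(u_1)=1$, $d_{G_0}(u_2)=2$, $d_{G_0}(u_3)\in\{3,4\}$, $d_{G_0}(u_4)=1$, and $u_1u_2,u_3u_4\in E(G_0)$. Let $P=v_1v_2\cdots v_l$ ($l\ge 1$) be a path vertex-disjoint from $G_0$. Let $G_1$ be the graph obtained from the disjoint union of $G_0$ and $P$ by adding the edge $u_1v_1$, and let $G_2=G_1-u_1v_1+u_4v_1$. Then $SO(G_1)>SO(G_2)$ and $SO_{red}(G_1)>SO_{red}(G_2)$.
   Context: $d_G(u)$ denotes the degree of $u$ in $G$. $SO(G)=\sum_{uv\in E(G)}\sqrt{d_G(u)^2+d_G(v)^2}$ and $SO_{red}(G)=\sum_{uv\in E(G)}\sqrt{(d_G(u)-1)^2+(d_G(v)-1)^2}$. *)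

theory Defs
  imports Complex_Main
begin

definition simple_graph :: "'a set \<Rightarrow> 'a set set \<Rightarrow> bool" where
  "simple_graph V E \<longleftrightarrow> finite V \<and>
     (\<forall>e\<in>E. \<exists>x y. x \<in> V \<and> y \<in> V \<and> x \<noteq> y \<and> e = {x, y})"

definition deg :: "'a set set \<Rightarrow> 'a \<Rightarrow> nat" where
  "deg E u = card {e \<in> E. u \<in> e}"

definition graph_connected :: "'a set \<Rightarrow> 'a set set \<Rightarrow> bool" where
  "graph_connected V E \<longleftrightarrow> (\<forall>x\<in>V. \<forall>y\<in>V. (\<lambda>a b. {a, b} \<in> E)\<^sup>*\<^sup>* x y)"

text \<open>Sombor index: sum over edges uv of sqrt(d(u)^2 + d(v)^2); for an edge e = {u,v}
  with u \<noteq> v this is sqrt of the sum over x in e of d(x)^2.\<close>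
definition SO :: "'a set set \<Rightarrow> real" where
  "SO E = (\<Sum>e\<in>E. sqrt (\<Sum>x\<in>e. (real (deg E x))\<^sup>2))"

definition SO_red :: "'a set set \<Rightarrow> real" where
  "SO_red E = (\<Sum>e\<in>E. sqrt (\<Sum>x\<in>e. (real (deg E x) - 1)\<^sup>2))"

definition path_edges :: "(nat \<Rightarrow> 'a) \<Rightarrow> nat \<Rightarrow> 'a set set" where
  "path_edges v l = {{v i, v (Suc i)} | i. 1 \<le> i \<and> i < l}"

end

theory Submission
  imports Defs
begin

definition Fsum :: "(nat \<Rightarrow> real) \<Rightarrow> 'a set set \<Rightarrow> real" where
  "Fsum \<phi> E = (\<Sum>e\<in>E. sqrt (\<Sum>x\<in>e. \<phi> (deg E x)))"

lemma deg_insert: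
  assumes "finite B" "f \<notin> B"
  shows "deg (insert f B) x = deg B x + (if x \<in> f then 1 else 0)"
proof -
  have "{e \<in> insert f B. x \<in> e} = (if x\<in>f then insert f {e\<in>B. x\<in>e} else {e\<in>B. x\<in>e})"
    by auto
  then show ?thesis using assms by (simp add: deg_def)
qed

lemma sq_lt: "(a::real)^2 < y \<Longrightarrow> a < sqrt y" by (rule real_less_rsqrt)
lemma sq_gt: "0 \<le> (a::real) \<Longrightarrow> y < a^2 \<Longrightarrow> sqrt y < a" by (rule real_less_lsqrt)

theorem lemma2p1:
  fixes V0 :: "'a set" and E0 :: "'a set set"
    and u1 u2 u3 u4 :: 'a and v :: "nat \<Rightarrow> 'a" and l :: nat
    and E1 E2 :: "'a set set"
  assumes G0: "simple_graph V0 E0" "graph_connected V0 E0"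
    and u: "u1 \<in> V0" "u2 \<in> V0" "u3 \<in> V0" "u4 \<in> V0"
    and d: "deg E0 u1 = 1" "deg E0 u2 = 2" "deg E0 u3 \<in> {3, 4}" "deg E0 u4 = 1"
    and e: "{u1, u2} \<in> E0" "{u3, u4} \<in> E0"
    and l: "l \<ge> 1"
    and P: "inj_on v {1..l}" "v ` {1..l} \<inter> V0 = {}"
    and E1_def: "E1 = E0 \<union> path_edges v l \<union> {{u1, v 1}}"
    and E2_def: "E2 = (E1 - {{u1, v 1}}) \<union> {{u4, v 1}}"
  shows "SO E1 > SO E2 \<and> SO_red E1 > SO_red E2"
proof -
  define D where "D = deg E0 u3"
  define B where "B = E0 \<union> path_edges v l"
  have finV: "finite V0" using G0(1) unfolding simple_graph_def by (rule conjunct1)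
  have sg: "\<forall>e\<in>E0. \<exists>x y. x \<in> V0 \<and> y \<in> V0 \<and> x \<noteq> y \<and> e = {x, y}"
    using G0(1) unfolding simple_graph_def by (rule conjunct2)
  have sub0: "e \<subseteq> V0" and two0: "\<exists>x y. x \<noteq> y \<and> e = {x,y}" if eE: "e \<in> E0" for e
  proof -
    obtain x y where xy: "x \<in> V0" "y \<in> V0" "x \<noteq> y" "e = {x, y}"
      using sg eE by meson
    show "e \<subseteq> V0" using xy by simp
    show "\<exists>x y. x \<noteq> y \<and> e = {x,y}" using xy(3,4) by (intro exI conjI)
  qed
  have finE0: "finite E0"
  proof (rule finite_subset[of E0 "Pow V0"])
    show "E0 \<subseteq> Pow V0" using sub0 by blast
    show "finite (Pow V0)" using finV by simp
  qed
  have pe: "path_edges v l = (\<lambda>i. {v i, v (Suc i)}) ` {1..<l}"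
    unfolding path_edges_def by auto
  have finP: "finite (path_edges v l)" unfolding pe by simp
  have subP: "\<And>e. e \<in> path_edges v l \<Longrightarrow> e \<subseteq> v ` {1..l}"
    unfolding pe by auto
  have v1: "v 1 \<in> v ` {1..l}" using l by auto
  have v1n: "v 1 \<notin> V0" using v1 P(2) by blast
  have nP: "\<And>x e. x \<in> V0 \<Longrightarrow> e \<in> path_edges v l \<Longrightarrow> x \<notin> e" using subP P(2) by blast
  have finB: "finite B" unfolding B_def using finE0 finP by simp
  have f1B: "{u1, v 1} \<notin> B" unfolding B_def using sub0 v1n nP u(1) by blast
  have f4B: "{u4, v 1} \<notin> B" unfolding B_def using sub0 v1n nP u(4) by blast
  have E1B: "E1 = insert {u1, v 1} B" unfolding E1_def B_def by simp
  have E2B: "E2 = insert {u4, v 1} B" 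
  proof -
    have "insert {u1, v 1} B - {{u1, v 1}} = B" using f1B by blast
    then show ?thesis unfolding E2_def E1B by simp
  qed
  have degB: "\<And>x. x \<in> V0 \<Longrightarrow> deg B x = deg E0 x"
  proof -
    fix x assume x: "x \<in> V0"
    have "{e \<in> B. x \<in> e} = {e \<in> E0. x \<in> e}" unfolding B_def using nP[OF x] by blast
    then show "deg B x = deg E0 x" unfolding deg_def by simp
  qed
  have d1: "\<And>x. deg E1 x = deg B x + (if x \<in> {u1, v 1} then 1 else 0)"
    unfolding E1B by (rule deg_insert[OF finB f1B])
  have d2: "\<And>x. deg E2 x = deg B x + (if x \<in> {u4, v 1} then 1 else 0)"
    unfolding E2B by (rule deg_insert[OF finB f4B])
  have only: "\<And>w f. deg E0 w = 1 \<Longrightarrow> f \<in> E0 \<Longrightarrow> w \<in> f \<Longrightarrow> \<forall>g\<in>E0. w \<in> g \<longrightarrow> g = f"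
  proof (intro ballI impI)
    fix w f g assume a: "deg E0 w = 1" "f \<in> E0" "w \<in> f" "g \<in> E0" "w \<in> g"
    have "card {e \<in> E0. w \<in> e} = 1" using a(1) unfolding deg_def .
    then obtain z where z: "{e \<in> E0. w \<in> e} = {z}" by (rule card_1_singletonE)
    have "f \<in> {e \<in> E0. w \<in> e}" "g \<in> {e \<in> E0. w \<in> e}" using a by simp_all
    then show "g = f" unfolding z by simp
  qed
  have m1: "u1 \<in> {u1,u2}" and m4: "u4 \<in> {u3,u4}" by simp_all
  have D34: "D = 3 \<or> D = 4" using d(3) unfolding D_def by simp
  have u12: "u1 \<noteq> u2" using d by auto
  have u34: "u3 \<noteq> u4"
  proof -
    obtain x y where "x \<noteq> y" "{u3, u4} = {x, y}" using two0[OF e(2)] by blast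
    then show ?thesis by (auto simp: doubleton_eq_iff)
  qed
  have u13: "u1 \<noteq> u3"
  proof
    assume "u1 = u3" then have "deg E0 u3 = 1" using d(1) by simp
    then show False using d(3) by simp
  qed
  have u23: "u2 \<noteq> u3"
  proof
    assume "u2 = u3" then have "deg E0 u3 = 2" using d(2) by simp
    then show False using d(3) by simp
  qed
  have u24: "u2 \<noteq> u4" using d by auto
  have u14: "u1 \<noteq> u4"
  proof
    assume "u1 = u4"
    then have "u1 \<in> {u3, u4}" by simp
    then have "{u3, u4} = {u1, u2}" using only[OF d(1) e(1) m1, rule_format, OF e(2)] by simp
    then show False using u13 u23 by (simp add: doubleton_eq_iff)
  qed
  have e12B: "{u1,u2} \<in> B" and e34B: "{u3,u4} \<in> B" unfolding B_def using e by auto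
  have ne: "{u1,u2} \<noteq> {u3,u4}" using u13 u14 by (simp add: doubleton_eq_iff)
  have other: "\<And>f x. f \<in> B \<Longrightarrow> f \<noteq> {u1,u2} \<Longrightarrow> f \<noteq> {u3,u4} \<Longrightarrow> x \<in> f \<Longrightarrow> x \<noteq> u1 \<and> x \<noteq> u4"
  proof -
    fix f x assume a: "f \<in> B" "f \<noteq> {u1,u2}" "f \<noteq> {u3,u4}" "x \<in> f"
    show "x \<noteq> u1 \<and> x \<noteq> u4"
    proof (cases "f \<in> E0")
      case True
      have h1: "x \<noteq> u1"
      proof
        assume "x = u1" then have "u1 \<in> f" using a(4) by simp
        then have "f = {u1,u2}" using only[OF d(1) e(1) m1, rule_format, OF True] by simp
        then show False using a(2) by simp
      qed
      have h4: "x \<noteq> u4"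
      proof
        assume "x = u4" then have "u4 \<in> f" using a(4) by simp
        then have "f = {u3,u4}" using only[OF d(4) e(2) m4, rule_format, OF True] by simp
        then show False using a(3) by simp
      qed
      show ?thesis using h1 h4 by simp
    next
      case False
      then have "f \<in> path_edges v l" using a(1) unfolding B_def by auto
      then show ?thesis using nP u a(4) by blast
    qed
  qed
  have key: "Fsum \<phi> E1 - Fsum \<phi> E2 =
      sqrt (\<phi> 2 + \<phi> 2) + sqrt (\<phi> D + \<phi> 1) - sqrt (\<phi> 1 + \<phi> 2) - sqrt (\<phi> D + \<phi> 2)" for \<phi>
  proof -
    define g1 where "g1 e = sqrt (\<Sum>x\<in>e. \<phi> (deg E1 x))" for e
    define g2 where "g2 e = sqrt (\<Sum>x\<in>e. \<phi> (deg E2 x))" for e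
    define R where "R = B - {{u1,u2}} - {{u3,u4}}"
    have finR: "finite R" unfolding R_def using finB by simp
    have r1: "sum g B = g {u1,u2} + g {u3,u4} + sum g R" for g :: "'a set \<Rightarrow> real"
    proof -
      have "sum g B = g {u1,u2} + sum g (B - {{u1,u2}})" using sum.remove[OF finB e12B] .
      also have "sum g (B - {{u1,u2}}) = g {u3,u4} + sum g R"
      proof -
        have m: "{u3,u4} \<in> B - {{u1,u2}}" using e34B ne by blast
        have f: "finite (B - {{u1,u2}})" using finB by blast
        show ?thesis unfolding R_def by (rule sum.remove[OF f m])
      qed
      finally show ?thesis by simp
    qed
    have RR: "sum g1 R = sum g2 R"
    proof (rule sum.cong[OF refl])
      fix f assume f: "f \<in> R"
      have "\<And>x. x \<in> f \<Longrightarrow> deg E1 x = deg E2 x"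
      proof -
        fix x assume "x \<in> f"
        have fB: "f \<in> B" "f \<noteq> {u1,u2}" "f \<noteq> {u3,u4}" using f unfolding R_def by simp_all
        then have "x \<noteq> u1 \<and> x \<noteq> u4" using other[OF fB \<open>x \<in> f\<close>] by blast
        then show "deg E1 x = deg E2 x" using d1 d2 by simp
      qed
      then show "g1 f = g2 f" unfolding g1_def g2_def by simp
    qed
    have F1: "Fsum \<phi> E1 = g1 {u1, v 1} + sum g1 B"
      unfolding Fsum_def g1_def E1B using finB f1B by simp
    have F2: "Fsum \<phi> E2 = g2 {u4, v 1} + sum g2 B"
      unfolding Fsum_def g2_def E2B using finB f4B by simp
    have n1: "u1 \<noteq> v 1" "u2 \<noteq> v 1" "u3 \<noteq> v 1" "u4 \<noteq> v 1" using u v1n by auto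
    note neqs = u12 u13 u14 u23 u24 u34 u12[symmetric] u13[symmetric] u14[symmetric]
      u23[symmetric] u24[symmetric] u34[symmetric]
    have dE1: "deg E1 u1 = 2" "deg E1 u2 = 2" "deg E1 u3 = D" "deg E1 u4 = 1"
      "deg E1 (v 1) = deg B (v 1) + 1"
      using d1[of u1] d1[of u2] d1[of u3] d1[of u4] d1[of "v 1"] degB[OF u(1)] degB[OF u(2)]
        degB[OF u(3)] degB[OF u(4)] d n1 n1[symmetric] neqs unfolding D_def by simp_all
    have dE2: "deg E2 u1 = 1" "deg E2 u2 = 2" "deg E2 u3 = D" "deg E2 u4 = 2"
      "deg E2 (v 1) = deg B (v 1) + 1"
      using d2[of u1] d2[of u2] d2[of u3] d2[of u4] d2[of "v 1"] degB[OF u(1)] degB[OF u(2)]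
        degB[OF u(3)] degB[OF u(4)] d n1 n1[symmetric] neqs unfolding D_def by simp_all
    have "g1 {u1, v 1} = g2 {u4, v 1}" unfolding g1_def g2_def using n1 dE1 dE2 by simp
    moreover have "g1 {u1,u2} = sqrt (\<phi> 2 + \<phi> 2)" unfolding g1_def using u12 dE1 by simp
    moreover have "g1 {u3,u4} = sqrt (\<phi> D + \<phi> 1)" unfolding g1_def using u34 dE1 by simp
    moreover have "g2 {u1,u2} = sqrt (\<phi> 1 + \<phi> 2)" unfolding g2_def using u12 dE2 by simp
    moreover have "g2 {u3,u4} = sqrt (\<phi> D + \<phi> 2)" unfolding g2_def using u34 dE2 by simp
    ultimately show ?thesis using F1 F2 r1[of g1] r1[of g2] RR by simp
  qed
  have SOF: "SO E = Fsum (\<lambda>n. (real n)^2) E" for E :: "'a set set"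
    unfolding SO_def Fsum_def by simp
  have SOrF: "SO_red E = Fsum (\<lambda>n. (real n - 1)^2) E" for E :: "'a set set"
    unfolding SO_red_def Fsum_def by simp
  have a8: "2.8 < sqrt (8::real)" by (rule sq_lt) (simp add: power2_eq_square)
  have a5: "sqrt (5::real) < 2.25" by (rule sq_gt) (simp_all add: power2_eq_square)
  have a2: "1.41 < sqrt (2::real)" by (rule sq_lt) (simp add: power2_eq_square)
  have A: "SO E1 > SO E2"
  proof -
    have "SO E1 - SO E2 = sqrt 8 + sqrt ((real D)^2 + 1) - sqrt 5 - sqrt ((real D)^2 + 4)"
      unfolding SOF key by simp
    moreover have "sqrt 8 + sqrt ((real D)^2 + 1) - sqrt 5 - sqrt ((real D)^2 + 4) > 0"
    proof (cases "D = 3")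
      case True
      have "3.1 < sqrt (10::real)" by (rule sq_lt) (simp add: power2_eq_square)
      moreover have "sqrt (13::real) < 3.61" by (rule sq_gt) (simp_all add: power2_eq_square)
      ultimately show ?thesis using True a8 a5 by simp
    next
      case False
      then have "D = 4" using D34 by simp
      have "4.1 < sqrt (17::real)" by (rule sq_lt) (simp add: power2_eq_square)
      moreover have "sqrt (20::real) < 4.48" by (rule sq_gt) (simp_all add: power2_eq_square)
      ultimately show ?thesis using \<open>D = 4\<close> a8 a5 by simp
    qed
    ultimately show ?thesis by simp
  qed
  have B2: "SO_red E1 > SO_red E2"
  proof -
    have "SO_red E1 - SO_red E2 = sqrt 2 + sqrt ((real D - 1)^2) - 1 - sqrt ((real D - 1)^2 + 1)"
      unfolding SOrF key by simp
    moreover have "sqrt 2 + sqrt ((real D - 1)^2) - 1 - sqrt ((real D - 1)^2 + 1) > 0"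
    proof (cases "D = 3")
      case True
      have "sqrt (5::real) < 2.25" by (rule sq_gt) (simp_all add: power2_eq_square)
      then show ?thesis using True a2 by simp
    next
      case False
      then have "D = 4" using D34 by simp
      have "sqrt (10::real) < 3.17" by (rule sq_gt) (simp_all add: power2_eq_square)
      then show ?thesis using \<open>D = 4\<close> a2 by simp
    qed
    ultimately show ?thesis by simp
  qed
  show ?thesis using A B2 by simp
qed

end
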